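(* Let $m,n,r$ be positive integers. There exists an edge coloring of $\Gamma_{m,n}$ with $r$ colors containing no alternating rectangle if and only if there are edge colorings $c_1,\dots,c_m$ of the complete graph $K_n$, each with $r$ colors, such that $\chi(\mathcal{G}(c_i,c_j))\le r$ for all pairs of indices $i,j$.
   Context: The grid graph $\Gamma_{m,n}$ is the graph on vertex set $[m]\times[n]$ in which distinct vertices $(i,j),(i',j')$ are adjacent iff $i=i'$ or $j=j'$. A rectangle is the induced subgraph on $\{(i,j),(i',j),(i,j'),(i',j')\}$ with $i<i'$, $j<j'$; in an edge coloring it is alternating if $\{(i,j),(i',j)\}$ and $\{(i,j'),(i',j')\}$ have the same color and $\{(i,j),(i,j')\}$ and $\{(i',j),(i',j')\}$ have the same color. For two edge colorings $c_1,c_2$ of $K_n$, $\mathcal{G}(c_1,c_2)$ is the spanning subgraph of $K_n$ consisting of the edges $e$ with $c_1(e)=c_2(e)$; $\chi$ denotes chromatic number. *)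

theory Defs
  imports Main
begin

text \<open>Vertices of the grid graph are pairs (i,j) with i < m, j < n (0-based [m] x [n]).
  Edges are represented as two-element sets of vertices.\<close>

definition grid_edges :: "nat \<Rightarrow> nat \<Rightarrow> (nat \<times> nat) set set" where
  "grid_edges m n = {{u, v} | u v. u \<in> {0..<m} \<times> {0..<n} \<and> v \<in> {0..<m} \<times> {0..<n}
       \<and> u \<noteq> v \<and> (fst u = fst v \<or> snd u = snd v)}"

definition edge_coloring :: "'v set set \<Rightarrow> nat \<Rightarrow> ('v set \<Rightarrow> nat) \<Rightarrow> bool" where
  "edge_coloring E r c \<longleftrightarrow> (\<forall>e\<in>E. c e < r)"

definition alternating_rectangle ::
    "((nat \<times> nat) set \<Rightarrow> nat) \<Rightarrow> nat \<Rightarrow> nat \<Rightarrow> nat \<Rightarrow> nat \<Rightarrow> bool" where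
  "alternating_rectangle c i i' j j' \<longleftrightarrow>
     c {(i, j), (i', j)} = c {(i, j'), (i', j')} \<and>
     c {(i, j), (i, j')} = c {(i', j), (i', j')}"

definition complete_edges :: "nat \<Rightarrow> nat set set" where
  "complete_edges n = {{x, y} | x y. x < n \<and> y < n \<and> x \<noteq> y}"

definition agreement_edges :: "(nat set \<Rightarrow> nat) \<Rightarrow> (nat set \<Rightarrow> nat) \<Rightarrow> nat \<Rightarrow> nat set set" where
  "agreement_edges c1 c2 n = {e \<in> complete_edges n. c1 e = c2 e}"

definition colorable :: "'v set \<Rightarrow> 'v set set \<Rightarrow> nat \<Rightarrow> bool" where
  "colorable V E k \<longleftrightarrow> (\<exists>f. (\<forall>v\<in>V. f v < k) \<and>
       (\<forall>e\<in>E. \<forall>u\<in>e. \<forall>v\<in>e. u \<noteq> v \<longrightarrow> f u \<noteq> f v))"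

definition chromatic_number :: "'v set \<Rightarrow> 'v set set \<Rightarrow> nat" where
  "chromatic_number V E = (LEAST k. colorable V E k)"

end

theory Submission
  imports Defs
begin

lemma colorable_mono: "colorable V E k \<Longrightarrow> k \<le> k' \<Longrightarrow> colorable V E k'"
  unfolding colorable_def by (meson order_less_le_trans)

lemma agree_colorable_n: "colorable {0..<n} (agreement_edges a b n) n"
  unfolding colorable_def agreement_edges_def complete_edges_def
  by (rule exI[of _ id]) auto

lemma chrom_le_iff: "chromatic_number {0..<n} (agreement_edges a b n) \<le> r \<longleftrightarrow>
   colorable {0..<n} (agreement_edges a b n) r"
proof
  assume h: "chromatic_number {0..<n} (agreement_edges a b n) \<le> r"
  have "colorable {0..<n} (agreement_edges a b n) (chromatic_number {0..<n} (agreement_edges a b n))"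
    unfolding chromatic_number_def by (rule LeastI[of "\<lambda>k. colorable {0..<n} (agreement_edges a b n) k", OF agree_colorable_n])
  then show "colorable {0..<n} (agreement_edges a b n) r" using h colorable_mono by blast
next
  assume "colorable {0..<n} (agreement_edges a b n) r"
  then show "chromatic_number {0..<n} (agreement_edges a b n) \<le> r"
    unfolding chromatic_number_def by (rule Least_le)
qed

theorem lemma3p1:
  fixes m n r :: nat
  assumes "0 < m" and "0 < n" and "0 < r"
  shows "(\<exists>c :: (nat \<times> nat) set \<Rightarrow> nat. edge_coloring (grid_edges m n) r c \<and>
            \<not> (\<exists>i i' j j'. i < i' \<and> i' < m \<and> j < j' \<and> j' < n \<and>
                  alternating_rectangle c i i' j j'))
       \<longleftrightarrow>
         (\<exists>cs :: nat \<Rightarrow> nat set \<Rightarrow> nat.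
            (\<forall>i<m. edge_coloring (complete_edges n) r (cs i)) \<and>
            (\<forall>i<m. \<forall>j<m. i \<noteq> j \<longrightarrow>
                chromatic_number {0..<n} (agreement_edges (cs i) (cs j) n) \<le> r))"
proof
  assume "\<exists>c. edge_coloring (grid_edges m n) r c \<and>
            \<not> (\<exists>i i' j j'. i < i' \<and> i' < m \<and> j < j' \<and> j' < n \<and>
                  alternating_rectangle c i i' j j')"
  then obtain c where ec: "edge_coloring (grid_edges m n) r c" and
    na: "\<And>i i' j j'. i < i' \<Longrightarrow> i' < m \<Longrightarrow> j < j' \<Longrightarrow> j' < n \<Longrightarrow>
                  \<not> alternating_rectangle c i i' j j'" by blast
  have ge: "\<And>u v. u \<in> {0..<m} \<times> {0..<n} \<Longrightarrow> v \<in> {0..<m} \<times> {0..<n}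
       \<Longrightarrow> u \<noteq> v \<Longrightarrow> fst u = fst v \<or> snd u = snd v \<Longrightarrow> c {u,v} < r"
    using ec unfolding edge_coloring_def grid_edges_def by blast
  define cs where "cs i e = c ((\<lambda>j. (i,j)) ` e)" for i e
  have A: "\<forall>i<m. edge_coloring (complete_edges n) r (cs i)"
    unfolding edge_coloring_def complete_edges_def cs_def
    using ge by force
  have B: "colorable {0..<n} (agreement_edges (cs i) (cs i') n) r"
    if "i < m" "i' < m" "i \<noteq> i'" for i i'
  proof -
    define f where "f x = c {(i,x),(i',x)}" for x
    show ?thesis unfolding colorable_def
    proof (intro exI[of _ f] conjI ballI impI)
      fix v assume "v \<in> {0..<n}" then show "f v < r"
        unfolding f_def using ge that by auto
    next
      fix e u v assume e: "e \<in> agreement_edges (cs i) (cs i') n" and u: "u \<in> e" and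
        v: "v \<in> e" and uv: "u \<noteq> v"
      from e obtain x y where exy: "e = {x,y}" "x < n" "y < n" "x \<noteq> y"
        and eq: "cs i e = cs i' e"
        unfolding agreement_edges_def complete_edges_def by blast
      have uvxy: "{u,v} = {x,y}" using u v uv exy by auto
      show "f u \<noteq> f v"
      proof
        assume fe: "f u = f v"
        define j where "j = min u v"
        define j' where "j' = max u v"
        define a where "a = min i i'"
        define a' where "a' = max i i'"
        have jj: "{j,j'} = {x,y}" "j < j'" "j' < n" using uvxy uv exy
          unfolding j_def j'_def by (auto simp: min_def max_def doubleton_eq_iff)
        have aa: "a < a'" "a' < m" "{a,a'} = {i,i'}" using that unfolding a_def a'_def by auto
        have fj: "f j = f j'" using fe unfolding j_def j'_def by (auto simp: min_def max_def)
        have "alternating_rectangle c a a' j j'"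
          unfolding alternating_rectangle_def
        proof
          have "{(a, j), (a', j)} = {(i,j),(i',j)}" "{(a, j'), (a', j')} = {(i,j'),(i',j')}"
            using aa(3) by (auto simp: doubleton_eq_iff)
          then show "c {(a, j), (a', j)} = c {(a, j'), (a', j')}" using fj unfolding f_def by simp
        next
          have "cs i {j,j'} = cs i' {j,j'}" using eq exy(1) jj(1) by simp
          then have "c {(i,j),(i,j')} = c {(i',j),(i',j')}" unfolding cs_def by simp
          then show "c {(a, j), (a, j')} = c {(a', j), (a', j')}"
            unfolding a_def a'_def by (cases "i \<le> i'") auto
        qed
        then show False using na aa jj by blast
      qed
    qed
  qed
  show "\<exists>cs :: nat \<Rightarrow> nat set \<Rightarrow> nat.
            (\<forall>i<m. edge_coloring (complete_edges n) r (cs i)) \<and>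
            (\<forall>i<m. \<forall>j<m. i \<noteq> j \<longrightarrow>
                chromatic_number {0..<n} (agreement_edges (cs i) (cs j) n) \<le> r)"
    using A B chrom_le_iff by blast
next
  assume "\<exists>cs :: nat \<Rightarrow> nat set \<Rightarrow> nat.
            (\<forall>i<m. edge_coloring (complete_edges n) r (cs i)) \<and>
            (\<forall>i<m. \<forall>j<m. i \<noteq> j \<longrightarrow>
                chromatic_number {0..<n} (agreement_edges (cs i) (cs j) n) \<le> r)"
  then obtain cs :: "nat \<Rightarrow> nat set \<Rightarrow> nat" where
    ec: "\<And>i. i<m \<Longrightarrow> edge_coloring (complete_edges n) r (cs i)" and
    ch: "\<And>i j. i<m \<Longrightarrow> j<m \<Longrightarrow> i \<noteq> j \<Longrightarrow> colorable {0..<n} (agreement_edges (cs i) (cs j) n) r"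
    using chrom_le_iff by blast
  define P where "P i i' f \<longleftrightarrow> (\<forall>v\<in>{0..<n}. f v < r) \<and>
       (\<forall>e\<in>agreement_edges (cs i) (cs i') n. \<forall>u\<in>e. \<forall>v\<in>e. u \<noteq> v \<longrightarrow> f u \<noteq> f v)"
    for i i' and f :: "nat \<Rightarrow> nat"
  define F where "F i i' = (SOME f. P i i' f)" for i i'
  have FP: "P i i' (F i i')" if "i<m" "i'<m" "i\<noteq>i'" for i i'
    unfolding F_def using ch[OF that] unfolding colorable_def P_def by (rule someI_ex)
  define c where "c e = (if card (fst ` e) = 1 then cs (fst (SOME p. p \<in> e)) (snd ` e)
      else F (Min (fst ` e)) (Max (fst ` e)) (snd (SOME p. p \<in> e)))" for e :: "(nat\<times>nat) set"
  have crow: "c {(i,x),(i,y)} = cs i {x,y}" for i x y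
  proof -
    have "fst (SOME p. p \<in> {(i,x),(i,y)}) = i"
      by (metis (mono_tags, lifting) fst_conv insertE insertI1 singletonD someI_ex)
    then show ?thesis unfolding c_def by simp
  qed
  have ccol: "c {(i,x),(i',x)} = F (min i i') (max i i') x" if "i \<noteq> i'" for i i' x
  proof -
    have "snd (SOME p. p \<in> {(i,x),(i',x)}) = x"
      by (metis (mono_tags, lifting) snd_conv insertE insertI1 singletonD someI_ex)
    then show ?thesis unfolding c_def using that by simp
  qed
  have E: "edge_coloring (grid_edges m n) r c"
    unfolding edge_coloring_def grid_edges_def
  proof (intro ballI)
    fix e assume "e \<in> {{u, v} | u v. u \<in> {0..<m} \<times> {0..<n} \<and> v \<in> {0..<m} \<times> {0..<n}
       \<and> u \<noteq> v \<and> (fst u = fst v \<or> snd u = snd v)}"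
    then obtain a b a' b' where h: "(a,b) \<in> {0..<m} \<times> {0..<n}" "(a',b') \<in> {0..<m} \<times> {0..<n}"
      "(a,b) \<noteq> (a',b')" "fst (a,b) = fst (a',b') \<or> snd (a,b) = snd (a',b')"
      and ee: "e = {(a,b),(a',b')}" by blast
    show "c e < r"
    proof (cases "a = a'")
      case True
      then have "b \<noteq> b'" using h by auto
      then have "{b,b'} \<in> complete_edges n" using h unfolding complete_edges_def by auto
      then have "cs a {b,b'} < r" using ec[of a] h unfolding edge_coloring_def by auto
      then show ?thesis using ee crow True by simp
    next
      case False
      then have "b = b'" using h by auto
      have "P (min a a') (max a a') (F (min a a') (max a a'))"
        using FP[of "min a a'" "max a a'"] h False by (auto simp: min_def max_def)
      then have "F (min a a') (max a a') b < r" using h unfolding P_def by auto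
      then show ?thesis using ee ccol[OF False] \<open>b = b'\<close> by simp
    qed
  qed
  have N: "\<not> (\<exists>i i' j j'. i < i' \<and> i' < m \<and> j < j' \<and> j' < n \<and>
                  alternating_rectangle c i i' j j')"
  proof
    assume "\<exists>i i' j j'. i < i' \<and> i' < m \<and> j < j' \<and> j' < n \<and> alternating_rectangle c i i' j j'"
    then obtain i i' j j' where h: "i < i'" "i' < m" "j < j'" "j' < n"
      and ar: "alternating_rectangle c i i' j j'" by blast
    have e1: "F i i' j = F i i' j'" using ar ccol[of i i'] h unfolding alternating_rectangle_def
      by simp
    have "cs i {j,j'} = cs i' {j,j'}" using ar crow unfolding alternating_rectangle_def by simp
    moreover have "{j,j'} \<in> complete_edges n"
      unfolding complete_edges_def using h
      by (intro CollectI exI[of _ j] exI[of _ j']) simp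
    ultimately have ag: "{j,j'} \<in> agreement_edges (cs i) (cs i') n"
      unfolding agreement_edges_def by blast
    have "P i i' (F i i')" using FP h by simp
    then have "\<forall>u\<in>{j,j'}. \<forall>v\<in>{j,j'}. u \<noteq> v \<longrightarrow> F i i' u \<noteq> F i i' v"
      using ag unfolding P_def by blast
    then have "F i i' j \<noteq> F i i' j'" using h by simp
    then show False using e1 by simp
  qed
  show "\<exists>c :: (nat \<times> nat) set \<Rightarrow> nat. edge_coloring (grid_edges m n) r c \<and>
            \<not> (\<exists>i i' j j'. i < i' \<and> i' < m \<and> j < j' \<and> j' < n \<and>
                  alternating_rectangle c i i' j j')"
    using E N by blast
qed

end
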